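(* Let $(g,f)$ be a Riordan matrix possessing a type-II $B$-sequence $(\hat b_j)_{j\ge0}$ with generating function $\hat B(t)=\sum_{j\ge0}\hat b_jt^j$, and let $Z(t)$ be the generating function of its $Z$-sequence. Then $$g=1+tg\,\hat B(tf),\qquad Z(f)=\hat B(tf),\qquad Z(t)=\hat B(t\bar f(t)).$$
   Context: Let $K$ be $\mathbb{R}$ or $\mathbb{C}$. A (proper) Riordan matrix is a pair $(g,f)$ of formal power series in $K[[t]]$ with $g(0)=1$, $f(0)=0$, $f'(0)\neq 0$, identified with the infinite lower triangular matrix $(d_{n,k})_{n,k\ge0}$, $d_{n,k}=[t^n]g(t)f(t)^k$; we set $d_{n,k}=0$ if $n<0$, $k<0$ or $k>n$. $\bar f$ is the compositional inverse of $f$. The $Z$-sequence of $(g,f)$ is the unique sequence whose generating function $Z(t)$ satisfies $g(t)=1/(1-tZ(f(t)))$. A type-II $B$-sequence of $(g,f)$ is a sequence $(\hat b_j)_{j\ge0}$ such that $d_{n+1,0}=\sum_{j\ge0}\hat b_j d_{n-j,j}$ for all $n\ge0$. *)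

theory Defs
  imports "HOL-Computational_Algebra.Formal_Power_Series"
begin

definition riordan :: "'a::field fps \<Rightarrow> 'a fps \<Rightarrow> bool" where
  "riordan g f \<longleftrightarrow> fps_nth g 0 = 1 \<and> fps_nth f 0 = 0 \<and> fps_nth f 1 \<noteq> 0"

text \<open>Entry d(n,k) = [t^n] g f^k, and 0 for k > n (negative indices do not occur for nat;
  the convention d(n-j,j)=0 for n-j<0 is handled by summing only over j \<le> n).\<close>
definition riordan_entry :: "'a::field fps \<Rightarrow> 'a fps \<Rightarrow> nat \<Rightarrow> nat \<Rightarrow> 'a" where
  "riordan_entry g f n k = (if k \<le> n then fps_nth (g * f ^ k) n else 0)"

definition is_Z_gf :: "'a::field fps \<Rightarrow> 'a fps \<Rightarrow> 'a fps \<Rightarrow> bool" where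
  "is_Z_gf g f Z \<longleftrightarrow> g = inverse (1 - fps_X * (Z oo f))"

text \<open>Type-II B-sequence: d(n+1,0) = sum_{j\<ge>0} b_j d(n-j,j) for all n
  (terms with j > n vanish since then n-j < 0).\<close>
definition is_typeII_B_seq :: "'a::field fps \<Rightarrow> 'a fps \<Rightarrow> (nat \<Rightarrow> 'a) \<Rightarrow> bool" where
  "is_typeII_B_seq g f b \<longleftrightarrow>
     (\<forall>n. riordan_entry g f (Suc n) 0 = (\<Sum>j\<le>n. b j * riordan_entry g f (n - j) j))"

end

theory Submission
  imports Defs
begin

notation fps_nth (infixl \<open>!$\<close> 75)

lemma mult_pow_nth0:
  fixes g a :: "'a::field fps"
  assumes "a !$ 0 = 0" "m < k"
  shows "(g * a ^ k) !$ m = 0"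
proof -
  have "\<And>i. i \<in> {0..m} \<Longrightarrow> g !$ i * (a ^ k) !$ (m - i) = 0"
    using startsby_zero_power_prefix[OF assms(1), of k] assms(2) by simp
  then show ?thesis unfolding fps_mult_nth by (intro sum.neutral) blast
qed

lemma prod_dep:
  fixes g a c :: "'a::field fps"
  assumes "\<And>i. i \<le> n \<Longrightarrow> a !$ i = c !$ i"
  shows "(g * a) !$ n = (g * c) !$ n"
  unfolding fps_mult_nth using assms by (intro sum.cong) auto

lemma step1:
  fixes g f :: "'a::field fps" and b :: "nat \<Rightarrow> 'a"
  assumes f0: "f !$ 0 = 0"
  shows "(g * (Abs_fps b oo (fps_X * f))) !$ n = (\<Sum>j\<le>n. b j * riordan_entry g f (n - j) j)"
proof -
  define h where "h = fps_X * f"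
  have h0: "h !$ 0 = 0" by (simp add: h_def)
  define c where "c = (\<Sum>j\<le>n. fps_const (b j) * h ^ j)"
  have agree: "(Abs_fps b oo h) !$ i = c !$ i" if "i \<le> n" for i
  proof -
    have "(Abs_fps b oo h) !$ i = (\<Sum>j=0..i. b j * (h ^ j) !$ i)" by (simp add: fps_compose_nth)
    also have "\<dots> = (\<Sum>j\<le>n. b j * (h ^ j) !$ i)"
    proof (rule sum.mono_neutral_left)
      show "\<forall>j\<in>{..n} - {0..i}. b j * (h ^ j) !$ i = 0"
        using startsby_zero_power_prefix[OF h0] by auto
    qed (use that in auto)
    also have "\<dots> = c !$ i" by (simp add: c_def fps_sum_nth)
    finally show ?thesis .
  qed
  have "(g * (Abs_fps b oo h)) !$ n = (g * c) !$ n" by (rule prod_dep) (use agree in auto)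
  also have "\<dots> = (\<Sum>j\<le>n. b j * (g * h ^ j) !$ n)"
  proof -
    have "\<And>k. g * (fps_const (b k) * h ^ k) = fps_const (b k) * (g * h ^ k)" by (simp add: mult_ac)
    have "(g * c) !$ n = (\<Sum>k\<le>n. g * (fps_const (b k) * h ^ k)) !$ n"
      unfolding c_def sum_distrib_left ..
    also have "\<dots> = (\<Sum>k\<le>n. (g * (fps_const (b k) * h ^ k)) !$ n)" by (rule fps_sum_nth)
    also have "\<dots> = (\<Sum>j\<le>n. b j * (g * h ^ j) !$ n)"
      unfolding \<open>\<And>k. g * (fps_const (b k) * h ^ k) = fps_const (b k) * (g * h ^ k)\<close>
      by (simp only: fps_mult_left_const_nth)
    finally show ?thesis .
  qed
  also have "\<dots> = (\<Sum>j\<le>n. b j * riordan_entry g f (n - j) j)"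
  proof (rule sum.cong[OF refl])
    fix j assume j: "j \<in> {..n}"
    have "(g * h ^ j) !$ n = (fps_X ^ j * (g * f ^ j)) !$ n"
      by (simp add: h_def power_mult_distrib mult_ac)
    also have "\<dots> = (g * f ^ j) !$ (n - j)" using j by (simp add: fps_X_power_mult_nth)
    also have "\<dots> = riordan_entry g f (n - j) j"
      using mult_pow_nth0[OF f0, of "n - j" j g] by (simp add: riordan_entry_def)
    finally show "b j * (g * h ^ j) !$ n = b j * riordan_entry g f (n - j) j" by simp
  qed
  finally show ?thesis by (simp add: h_def)
qed

theorem proposition3p1:
  fixes g f Z :: "'a::field_char_0 fps" and b :: "nat \<Rightarrow> 'a"
  assumes "riordan g f"
    and "is_typeII_B_seq g f b"
    and "is_Z_gf g f Z"
  shows "g = 1 + fps_X * g * (Abs_fps b oo (fps_X * f))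
       \<and> (Z oo f) = (Abs_fps b oo (fps_X * f))
       \<and> Z = (Abs_fps b oo (fps_X * fps_inv f))"
proof -
  have g0: "g !$ 0 = 1" and f0: "f !$ 0 = 0" and f1: "f !$ 1 \<noteq> 0"
    using assms(1) by (auto simp: riordan_def)
  define B where "B = Abs_fps b oo (fps_X * f)"
  have e1: "g = 1 + fps_X * g * B"
  proof (rule fps_ext)
    fix n show "g !$ n = (1 + fps_X * g * B) !$ n"
    proof (cases n)
      case 0 then show ?thesis using g0 by simp
    next
      case (Suc m)
      have "(1 + fps_X * g * B) !$ n = (g * B) !$ m" using Suc by (simp add: mult.assoc)
      also have "\<dots> = (\<Sum>j\<le>m. b j * riordan_entry g f (m - j) j)"
        unfolding B_def by (rule step1[OF f0])
      also have "\<dots> = riordan_entry g f (Suc m) 0"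
        using assms(2) by (simp add: is_typeII_B_seq_def)
      also have "\<dots> = g !$ n" using Suc by (simp add: riordan_entry_def)
      finally show ?thesis by simp
    qed
  qed
  define W where "W = Z oo f"
  have gi: "g = inverse (1 - fps_X * W)" using assms(3) by (simp add: is_Z_gf_def W_def)
  have "(1 - fps_X * W) !$ 0 \<noteq> 0" by simp
  hence gW: "g * (1 - fps_X * W) = 1" using gi by (simp add: inverse_mult_eq_1)
  have gB: "g * (1 - fps_X * B) = 1" using e1 by (simp add: algebra_simps)
  have gnz: "g \<noteq> 0" using g0 by auto
  have "g * (1 - fps_X * W) = g * (1 - fps_X * B)" using gW gB by simp
  hence "1 - fps_X * W = 1 - fps_X * B" using gnz by simp
  hence "fps_X * W = fps_X * B" by simp
  hence WB: "W = B" by simp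
  have "Z = Z oo (f oo fps_inv f)" using fps_inv_right[OF f0 f1] by simp
  also have "\<dots> = W oo fps_inv f"
    unfolding W_def by (rule fps_compose_assoc) (simp_all add: f0 fps_inv_def)
  also have "\<dots> = Abs_fps b oo ((fps_X * f) oo fps_inv f)"
    unfolding WB B_def by (rule fps_compose_assoc[symmetric]) (simp_all add: fps_inv_def)
  also have "(fps_X * f) oo fps_inv f = fps_X * fps_inv f"
  proof -
    have finv0: "fps_inv f !$ 0 = 0" by (simp add: fps_inv_def)
    show ?thesis by (simp add: fps_compose_mult_distrib[OF finv0] fps_inv_right[OF f0 f1] finv0)
  qed
  finally have "Z = Abs_fps b oo (fps_X * fps_inv f)" .
  then show ?thesis using e1 WB by (simp add: B_def W_def)
qed

end
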